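(* For all integers $k>1$, \[ c_k=1+O\Bigl(\frac1k\Bigr) \] with an absolute implied constant, where \[ c_k := \frac{2k}{2k-1}\,\frac{\zeta(2-1/k)}{\zeta(2)}\,\zeta(k)^2\prod_{p}\Bigl(1-\frac{2p}{(p+1)p^{k}}\Bigr). \]
   Context: $\zeta$ is the Riemann zeta function and the product is over all primes $p$. *)

theory Defs
  imports "HOL-Analysis.Analysis" "HOL-Computational_Algebra.Primes"
begin

definition zeta :: "real \<Rightarrow> real" where
  "zeta s = (\<Sum>n. 1 / (real (Suc n)) powr s)"

definition prime_prod :: "nat \<Rightarrow> real" where
  "prime_prod k = (\<Prod>p. if prime p then 1 - 2 * real p / ((real p + 1) * real p ^ k) else 1)"

definition c :: "nat \<Rightarrow> real" where
  "c k = (2 * real k / (2 * real k - 1)) * (zeta (2 - 1 / real k) / zeta 2)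
           * (zeta (real k))\<^sup>2 * prime_prod k"

end

theory Submission
  imports Defs
begin



lemma zsum: assumes "s > 1" shows "summable (\<lambda>n. 1 / real (Suc n) powr s)"
proof -
  have "summable (\<lambda>n. real n powr (-s))" using assms by (simp add: summable_real_powr_iff)
  then have "summable (\<lambda>n. real (Suc n) powr (-s))" by (subst summable_Suc_iff)
  then show ?thesis by (simp add: powr_minus_divide)
qed

lemma zeta_ge1: assumes "s > 1" shows "zeta s \<ge> 1"
proof -
  have "sum (\<lambda>n. 1 / real (Suc n) powr s) {0} \<le> zeta s"
    unfolding zeta_def by (rule sum_le_suminf[OF zsum[OF assms]]) auto
  then show ?thesis by simp
qed

lemma exp_aux: fixes x :: real assumes "x \<ge> 0" shows "exp x - 1 \<le> x * exp x"
proof -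
  have "1 - x \<le> exp (-x)" using exp_ge_add_one_self[of "-x"] by simp
  then have "(1 - x) * exp x \<le> exp (-x) * exp x" by (simp add: mult_right_mono)
  then show ?thesis by (simp add: exp_minus field_simps)
qed

lemma ln_aux: fixes x :: real assumes "x \<ge> 1" shows "ln x \<le> 4 * x powr (1/4)"
proof -
  have "ln (x powr (1/4)) \<le> x powr (1/4) - 1" using assms by (intro ln_le_minus_one) auto
  moreover have "ln (x powr (1/4)) = ln x / 4" using assms by (simp add: ln_powr)
  ultimately show ?thesis by simp
qed

lemma term_aux:
  fixes x e :: real assumes "x \<ge> 1" "0 \<le> e" "e \<le> 1/2"
  shows "1 / x powr (2 - e) - 1 / x powr 2 \<le> 4 * e * (1 / x powr (5/4))"
proof -
  have x0: "x > 0" using assms by simp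
  have "x powr e - 1 = exp (e * ln x) - 1" using x0 by (simp add: powr_def)
  also have "\<dots> \<le> e * ln x * exp (e * ln x)" using assms by (intro exp_aux) auto
  also have "\<dots> = e * ln x * x powr e" using x0 by (simp add: powr_def)
  also have "\<dots> \<le> e * (4 * x powr (1/4)) * x powr (1/2)"
    using assms ln_aux[OF assms(1)] by (intro mult_mono powr_mono) auto
  also have "\<dots> = 4 * e * x powr (3/4)" by (simp add: powr_add[symmetric])
  finally have A: "x powr e - 1 \<le> 4 * e * x powr (3/4)" .
  have "1 / x powr (2 - e) - 1 / x powr 2 = (x powr e - 1) / x powr 2"
    using x0 by (simp add: powr_diff field_simps)
  also have "\<dots> \<le> 4 * e * x powr (3/4) / x powr 2" using A x0 by (simp add: divide_right_mono)
  also have "\<dots> = 4 * e * (x powr (3/4) / x powr 2)" by simp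
  also have "x powr (3/4) / x powr 2 = x powr (3/4 - 2)" by (rule powr_diff[symmetric])
  also have "\<dots> = 1 / x powr (5/4)" by (simp add: powr_minus_divide[symmetric])
  finally show ?thesis .
qed


lemma zetaB:
  fixes e :: real assumes "0 \<le> e" "e \<le> 1/2"
  shows "zeta 2 \<le> zeta (2 - e)" "zeta (2 - e) \<le> zeta 2 + 4 * e * zeta (5/4)"
proof -
  have s1: "summable (\<lambda>n. 1 / real (Suc n) powr 2)" by (rule zsum) simp
  have s2: "summable (\<lambda>n. 1 / real (Suc n) powr (2 - e))" using assms by (intro zsum) simp
  have s3: "summable (\<lambda>n. 1 / real (Suc n) powr (5/4))" by (rule zsum) simp
  show "zeta 2 \<le> zeta (2 - e)" unfolding zeta_def
  proof (rule suminf_le[OF _ s1 s2])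
    fix n
    have le: "real (Suc n) powr (2 - e) \<le> real (Suc n) powr 2" by (rule powr_mono) (use assms in auto)
    show "1 / real (Suc n) powr 2 \<le> 1 / real (Suc n) powr (2 - e)"
      by (rule divide_left_mono[OF le]) simp_all
  qed
  have "zeta (2 - e) - zeta 2 = (\<Sum>n. 1 / real (Suc n) powr (2 - e) - 1 / real (Suc n) powr 2)"
    unfolding zeta_def by (simp only: suminf_diff[OF s2 s1])
  also have "\<dots> \<le> (\<Sum>n. 4 * e * (1 / real (Suc n) powr (5/4)))"
  proof (rule suminf_le)
    fix n show "1 / real (Suc n) powr (2 - e) - 1 / real (Suc n) powr 2 \<le> 4 * e * (1 / real (Suc n) powr (5/4))"
      using assms by (intro term_aux) auto
  qed (rule summable_diff[OF s2 s1], rule summable_mult[OF s3])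
  also have "\<dots> = 4 * e * zeta (5/4)" unfolding zeta_def by (rule suminf_mult[OF s3])
  finally show "zeta (2 - e) \<le> zeta 2 + 4 * e * zeta (5/4)" by simp
qed

lemma pow_aux:
  fixes x :: real assumes "x \<ge> 2" "k \<ge> 2"
  shows "1 / x ^ k \<le> (4 / 2 ^ k) * (1 / x ^ 2)"
proof -
  have "x ^ k = x ^ 2 * x ^ (k - 2)" using assms by (metis le_add_diff_inverse power_add)
  moreover have "(2::real) ^ (k - 2) \<le> x ^ (k - 2)" using assms by (intro power_mono) auto
  moreover have "(2::real) ^ k = 4 * 2 ^ (k - 2)" using assms
    by (metis (no_types) le_add_diff_inverse power_add power2_eq_square numeral_Bit0 mult_2 one_add_one numeral_One)
  ultimately have "x ^ 2 * 2 ^ (k - 2) \<le> x ^ k"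
    using assms by (metis mult_left_mono zero_le_power2)
  have xk: "x ^ k > 0" using assms by simp
  have "1 / x ^ k \<le> 1 / (x ^ 2 * 2 ^ (k - 2))"
    using \<open>x ^ 2 * 2 ^ (k - 2) \<le> x ^ k\<close> assms by (intro divide_left_mono) auto
  also have "\<dots> = (4 / 2 ^ k) * (1 / x ^ 2)" using \<open>(2::real) ^ k = 4 * 2 ^ (k - 2)\<close> by simp
  finally show ?thesis .
qed

lemma zetaK:
  fixes k :: nat assumes "k \<ge> 2"
  shows "1 \<le> zeta (real k)" "zeta (real k) \<le> 1 + 4 / 2 ^ k * zeta 2"
proof -
  show "1 \<le> zeta (real k)" using assms by (intro zeta_ge1) auto
  have sk: "summable (\<lambda>n. 1 / real (Suc n) powr real k)" using assms by (intro zsum) auto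
  have s1: "summable (\<lambda>n. 1 / real (Suc n) powr 2)" by (rule zsum) simp
  have "zeta (real k) - 1 = (\<Sum>n. 1 / real (Suc (Suc n)) powr real k)"
    unfolding zeta_def using suminf_split_head[OF sk] by simp
  also have "\<dots> \<le> (\<Sum>n. 4 / 2 ^ k * (1 / real (Suc (Suc n)) powr 2))"
  proof (rule suminf_le)
    fix n
    have "1 / real (Suc (Suc n)) ^ k \<le> 4 / 2 ^ k * (1 / real (Suc (Suc n)) ^ 2)"
      using assms by (intro pow_aux) auto
    then show "1 / real (Suc (Suc n)) powr real k \<le> 4 / 2 ^ k * (1 / real (Suc (Suc n)) powr 2)"
      by (simp add: powr_realpow)
  next
    show "summable (\<lambda>n. 1 / real (Suc (Suc n)) powr real k)" using sk by (subst summable_Suc_iff)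
  next
    show "summable (\<lambda>n. 4 / 2 ^ k * (1 / real (Suc (Suc n)) powr 2))"
      using s1 by (intro summable_mult) (subst summable_Suc_iff)
  qed
  also have "\<dots> = 4 / 2 ^ k * (zeta 2 - 1)"
  proof -
    have s1': "summable (\<lambda>n. 1 / real (Suc (Suc n)) powr 2)" using s1 by (subst summable_Suc_iff)
    have "(\<Sum>n. 1 / real (Suc (Suc n)) powr 2) = zeta 2 - 1"
      unfolding zeta_def using suminf_split_head[OF s1] by simp
    then show ?thesis using suminf_mult[OF s1', of "4 / 2 ^ k"] by simp
  qed
  also have "\<dots> \<le> 4 / 2 ^ k * zeta 2" by (intro mult_left_mono) auto
  finally show "zeta (real k) \<le> 1 + 4 / 2 ^ k * zeta 2" by simp
qed

lemma prod_aux: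
  fixes a :: "nat \<Rightarrow> real" assumes "finite I" "\<And>i. 0 \<le> a i" "\<And>i. a i \<le> 1"
  shows "1 - sum a I \<le> prod (\<lambda>i. 1 - a i) I \<and> prod (\<lambda>i. 1 - a i) I \<le> 1 \<and> 0 \<le> prod (\<lambda>i. 1 - a i) I"
  using assms(1)
proof (induction I rule: finite_induct)
  case empty then show ?case by simp
next
  case (insert x F)
  let ?P = "prod (\<lambda>i. 1 - a i) F" and ?S = "sum a F"
  have S0: "?S \<ge> 0" using assms by (intro sum_nonneg) auto
  have ax: "0 \<le> a x" "a x \<le> 1" using assms by auto
  have "(1 - a x) * (1 - ?S) \<le> (1 - a x) * ?P" using insert ax by (intro mult_left_mono) auto
  moreover have "1 - (a x + ?S) \<le> (1 - a x) * (1 - ?S)" using ax S0 by (simp add: algebra_simps)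
  moreover have "(1 - a x) * ?P \<le> 1" using insert ax by (simp add: mult_le_one)
  moreover have "0 \<le> (1 - a x) * ?P" using insert ax by simp
  moreover have "prod (\<lambda>i. 1 - a i) (insert x F) = (1 - a x) * ?P" using insert(1,2) by simp
  moreover have "sum a (insert x F) = a x + ?S" using insert(1,2) by simp
  ultimately show ?case by linarith
qed




lemma a_bound:
  fixes p k :: nat assumes k: "k \<ge> 2" and p: "prime p"
  shows "2 * real p / ((real p + 1) * real p ^ k) \<le> 2 / real p ^ k"
proof -
  have p2: "real p \<ge> 2" using p prime_ge_2_nat by fastforce
  have pk: "real p ^ k > 0" using p2 by simp
  have "2 * real p / ((real p + 1) * real p ^ k) = 2 / real p ^ k * (real p / (real p + 1))"
    using p2 by simp
  also have "real p / (real p + 1) \<le> 1" using p2 by simp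
  then have "2 / real p ^ k * (real p / (real p + 1)) \<le> 2 / real p ^ k * 1"
    by (rule mult_left_mono) (use pk in simp)
  finally show ?thesis by simp
qed

lemma g_eq: "1 / real (Suc p) powr 2 = 1 / (real p + 1) ^ 2"
  by (subst powr_realpow[symmetric]) (auto simp: add.commute)

lemma prime_prod_bounds:
  fixes k :: nat assumes k: "k \<ge> 2"
  shows "1 - 32 / 2 ^ k * zeta 2 \<le> prime_prod k" "0 \<le> prime_prod k" "prime_prod k \<le> 1"
proof -
  define a where "a p = (if prime p then 2 * real p / ((real p + 1) * real p ^ k) else 0)" for p
  define g where "g p = 1 / real (Suc p) powr 2" for p
  have s1: "summable g" unfolding g_def by (rule zsum) simp
  have feq: "(\<lambda>p. if prime p then 1 - 2 * real p / ((real p + 1) * real p ^ k) else 1) = (\<lambda>p. 1 - a p)"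
    unfolding a_def by (rule ext) simp
  have a0: "0 \<le> a p" for p by (simp add: a_def)
  have ag: "a p \<le> 32 / 2 ^ k * g p" for p
  proof (cases "prime p")
    case False then show ?thesis by (simp add: a_def g_def)
  next
    case True
    then have p2: "real p \<ge> 2" using prime_ge_2_nat by fastforce
    have gp: "1 / real p ^ 2 \<le> 4 * g p"
    proof -
      have "(real p + 1) ^ 2 \<le> (2 * real p) ^ 2" using p2 by (intro power_mono) auto
      then have sq: "(real p + 1) ^ 2 \<le> 4 * real p ^ 2" by (simp add: power_mult_distrib)
      have "1 / real p ^ 2 = 4 / (4 * real p ^ 2)" using p2 by simp
      also have "\<dots> \<le> 4 / (real p + 1) ^ 2"
        by (rule divide_left_mono[OF sq]) (use p2 in auto)
      also have "\<dots> = 4 * g p" unfolding g_def g_eq by simp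
      finally show ?thesis .
    qed
    have "a p \<le> 2 / real p ^ k" using a_bound[OF k True] True by (simp add: a_def)
    also have "\<dots> \<le> 2 * ((4 / 2 ^ k) * (1 / real p ^ 2))" using pow_aux[OF p2 k] by simp
    also have "\<dots> \<le> 2 * ((4 / 2 ^ k) * (4 * g p))"
      using gp by (intro mult_left_mono) auto
    finally show ?thesis by simp
  qed
  have a1: "a p \<le> 1" for p
  proof (cases "prime p")
    case False then show ?thesis by (simp add: a_def)
  next
    case True
    then have p2: "real p \<ge> 2" using prime_ge_2_nat by fastforce
    have "real p ^ 1 \<le> real p ^ k" using p2 k by (intro power_increasing) auto
    then have "real p \<le> real p ^ k" by (simp only: power_one_right)
    then have pk: "2 \<le> real p ^ k" using p2 by linarith
    have "a p \<le> 2 / real p ^ k" using a_bound[OF k True] True by (simp add: a_def)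
    also have "\<dots> \<le> 2 / 2" by (rule divide_left_mono[OF pk]) (use pk p2 in auto)
    finally show ?thesis by simp
  qed
  have sg: "summable (\<lambda>p. 32 / 2 ^ k * g p)" by (rule summable_mult[OF s1])
  have sa: "summable a"
    by (rule summable_comparison_test[OF _ sg]) (use a0 ag in auto)
  have suma: "suminf a \<le> 32 / 2 ^ k * zeta 2"
  proof -
    have "suminf a \<le> (\<Sum>p. 32 / 2 ^ k * g p)" by (rule suminf_le[OF ag sa sg])
    also have "\<dots> = 32 / 2 ^ k * zeta 2" unfolding zeta_def g_def by (rule suminf_mult[OF s1[unfolded g_def]])
    finally show ?thesis .
  qed
  have "summable (\<lambda>i. norm ((1 - a i) - 1))" using sa a0 by simp
  then have cp: "convergent_prod (\<lambda>p. 1 - a p)"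
    by (intro abs_convergent_prod_imp_convergent_prod summable_imp_abs_convergent_prod)
  have lim: "(\<lambda>n. \<Prod>i\<le>n. 1 - a i) \<longlonglongrightarrow> prime_prod k"
    unfolding prime_prod_def feq by (rule convergent_prod_LIMSEQ[OF cp])
  have pb: "1 - sum a {..n} \<le> (\<Prod>i\<le>n. 1 - a i) \<and> (\<Prod>i\<le>n. 1 - a i) \<le> 1 \<and> 0 \<le> (\<Prod>i\<le>n. 1 - a i)" for n
    by (rule prod_aux) (use a0 a1 in auto)
  have sle: "sum a {..n} \<le> suminf a" for n by (rule sum_le_suminf[OF sa]) (use a0 in auto)
  have lo: "1 - 32 / 2 ^ k * zeta 2 \<le> (\<Prod>i\<le>n. 1 - a i)" for n
    using pb[of n] sle[of n] suma by linarith
  show "1 - 32 / 2 ^ k * zeta 2 \<le> prime_prod k"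
    by (rule LIMSEQ_le_const[OF lim]) (use lo in auto)
  show "0 \<le> prime_prod k"
    by (rule LIMSEQ_le_const[OF lim]) (use pb in auto)
  show "prime_prod k \<le> 1"
    by (rule LIMSEQ_le_const2[OF lim]) (use pb in auto)
qed

lemma arith_aux:
  fixes A B z P u M :: real
  assumes "1 \<le> A" "A \<le> 1+u" "1\<le>B" "B\<le>1+u" "1\<le>z" "z\<le>1+u" "0\<le>P" "P\<le>1" "1 - u \<le> P" "0 \<le> u" "u \<le> M"
  shows "\<bar>A*B*z^2*P - 1\<bar> \<le> (4 + 6*M + 4*M^2 + M^3 + 1) * u"
proof -
  have z2: "1 \<le> z^2" "z^2 \<le> (1+u)^2" using assms by (auto intro: one_le_power power_mono)
  have "1*1 \<le> A*B" by (rule mult_mono) (use assms in auto)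
  have AB: "1 \<le> A*B" "A*B \<le> (1+u)*(1+u)" using assms \<open>1*1 \<le> A*B\<close> by (auto intro: mult_mono)
  have "1*1 \<le> A*B*z^2" by (rule mult_mono) (use AB z2 in auto)
  have "A*B*z^2 \<le> (1+u)*(1+u)*(1+u)^2" by (rule mult_mono) (use AB z2 in auto)
  then have ABz: "1 \<le> A*B*z^2" "A*B*z^2 \<le> (1+u)*(1+u)*(1+u)^2" using \<open>1*1 \<le> A*B*z^2\<close> by auto
  have up: "A*B*z^2*P \<le> A*B*z^2" using ABz assms by (simp add: mult_left_le)
  have lo: "P \<le> A*B*z^2*P" using ABz assms by (simp add: mult_le_cancel_right1)
  have "(1+u)*(1+u)*(1+u)^2 = 1 + u * (4 + 6*u + 4*u^2 + u^3)" by (simp add: power2_eq_square power3_eq_cube algebra_simps)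
  also have "\<dots> \<le> 1 + u * (4 + 6*M + 4*M^2 + M^3)"
  proof -
    have "u^2 \<le> M^2" "u^3 \<le> M^3" using assms by (auto intro: power_mono)
    then have "4 + 6*u + 4*u^2 + u^3 \<le> 4 + 6*M + 4*M^2 + M^3" using assms by linarith
    then show ?thesis using assms by (simp add: mult_left_mono)
  qed
  finally have "A*B*z^2*P - 1 \<le> u * (4 + 6*M + 4*M^2 + M^3)" using up ABz by linarith
  moreover have "1 - A*B*z^2*P \<le> u" using lo assms by linarith
  moreover have "0 \<le> M" using assms by linarith
  then have "0 \<le> (4 + 6*M + 4*M^2 + M^3) * u" using assms by simp
  moreover have "u * (4 + 6*M + 4*M^2 + M^3) = (4 + 6*M + 4*M^2 + M^3) * u" by (rule mult.commute)
  moreover have gen: "\<And>X K0 u :: real. X - 1 \<le> K0*u \<Longrightarrow> 1 - X \<le> u \<Longrightarrow> 0 \<le> K0*u \<Longrightarrow> 0 \<le> u \<Longrightarrow> \<bar>X - 1\<bar> \<le> (K0+1)*u"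
    by (simp add: abs_le_iff distrib_right)
  ultimately show ?thesis using assms(10) by (metis gen)
qed


theorem theorem3p1:
  shows "\<exists>C::real. \<forall>k::nat. k > 1 \<longrightarrow> \<bar>c k - 1\<bar> \<le> C / real k"
proof -
  define Z2 where "Z2 = zeta 2"
  define Z5 where "Z5 = zeta (5/4)"
  define M where "M = 1 + 4 * Z5 + 36 * Z2"
  define K where "K = 4 + 6*M + 4*M^2 + M^3 + 1"
  have Z2: "Z2 \<ge> 1" unfolding Z2_def by (rule zeta_ge1) simp
  have Z5: "Z5 \<ge> 1" unfolding Z5_def by (rule zeta_ge1) simp
  have M1: "M \<ge> 1" using Z2 Z5 unfolding M_def by simp
  show ?thesis
  proof (intro exI[of _ "K * M"] allI impI)
    fix k :: nat assume "k > 1"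
    then have k2: "k \<ge> 2" by simp
    have kr: "real k \<ge> 2" using k2 by simp
    define u where "u = M / real k"
    have u0: "0 \<le> u" using M1 kr unfolding u_def by simp
    have uM: "u \<le> M" using M1 kr unfolding u_def by (simp add: field_simps)
    have inv_le: "1 / real k \<le> u" using M1 kr unfolding u_def by (intro divide_right_mono) auto
    have pow_ge: "real k \<le> 2 ^ k"
    proof -
      have "k < 2 ^ k" by (rule less_exp)
      then have "real k \<le> real (2 ^ k)" by simp
      then show ?thesis by simp
    qed
    have d2k: "w / 2 ^ k \<le> w / real k" if "w \<ge> 0" for w :: real
      by (rule divide_left_mono[OF pow_ge]) (use that kr in auto)
    define A where "A = 2 * real k / (2 * real k - 1)"
    have A1: "1 \<le> A" unfolding A_def using kr by (simp add: field_simps)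
    have "A = 1 + 1 / (2 * real k - 1)" unfolding A_def using kr by (simp add: field_simps)
    moreover have "1 / (2 * real k - 1) \<le> 1 / real k" using kr by (intro divide_left_mono) auto
    ultimately have A2: "A \<le> 1 + u" using inv_le by linarith
    define e where "e = 1 / real k"
    have e0: "0 \<le> e" "e \<le> 1/2" unfolding e_def using kr by (auto simp: field_simps)
    define B where "B = zeta (2 - 1 / real k) / zeta 2"
    have B1: "1 \<le> B" unfolding B_def using zetaB(1)[OF e0] Z2 unfolding e_def Z2_def by simp
    have "zeta (2 - e) \<le> Z2 + 4 * e * Z5" using zetaB(2)[OF e0] unfolding Z2_def Z5_def .
    also have "\<dots> \<le> Z2 + Z2 * (4 * e * Z5)"
    proof -
      have "1 * (4 * e * Z5) \<le> Z2 * (4 * e * Z5)" by (rule mult_right_mono) (use Z2 e0 Z5 in auto)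
      then show ?thesis by simp
    qed
    finally have "zeta (2 - e) / Z2 \<le> 1 + 4 * e * Z5" using Z2 by (simp add: field_simps)
    moreover have "4 * e * Z5 \<le> u" unfolding u_def e_def M_def using kr Z2 by (simp add: field_simps)
    ultimately have B2: "B \<le> 1 + u" unfolding B_def Z2_def e_def by simp
    define z where "z = zeta (real k)"
    have z1: "1 \<le> z" unfolding z_def by (rule zetaK(1)[OF k2])
    have "z \<le> 1 + 4 / 2 ^ k * Z2" unfolding z_def Z2_def by (rule zetaK(2)[OF k2])
    moreover have "4 / 2 ^ k * Z2 \<le> 4 / real k * Z2" using d2k[of 4] Z2 by (intro mult_right_mono) auto
    moreover have "4 / real k * Z2 \<le> u" unfolding u_def M_def using kr Z5 Z2 by (simp add: field_simps)
    ultimately have z2: "z \<le> 1 + u" by linarith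
    define P where "P = prime_prod k"
    have P0: "0 \<le> P" "P \<le> 1" unfolding P_def using prime_prod_bounds[OF k2] by auto
    have "1 - 32 / 2 ^ k * Z2 \<le> P" unfolding P_def Z2_def by (rule prime_prod_bounds(1)[OF k2])
    moreover have "32 / 2 ^ k * Z2 \<le> 32 / real k * Z2" using d2k[of 32] Z2 by (intro mult_right_mono) auto
    moreover have "32 / real k * Z2 \<le> u" unfolding u_def M_def using kr Z5 Z2 by (simp add: field_simps)
    ultimately have P1: "1 - u \<le> P" by linarith
    have "\<bar>A*B*z^2*P - 1\<bar> \<le> K * u"
      unfolding K_def by (rule arith_aux) (use A1 A2 B1 B2 z1 z2 P0 P1 u0 uM in auto)
    moreover have "c k = A*B*z^2*P" unfolding c_def A_def B_def z_def P_def by simp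
    moreover have "K * u = K * M / real k" unfolding u_def by simp
    ultimately show "\<bar>c k - 1\<bar> \<le> K * M / real k" by simp
  qed
qed

end
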